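(* Let $\phi(x,y,z)=\alpha x+\beta y+\gamma z$ with $\alpha,\beta,\gamma\in\mathbb{R}$ not all zero, and let $S\subset\mathbb{R}^3$ be a surface of Riemann type foliated by circles (or arcs of circles) lying in parallel planes, all orthogonal to a nonzero vector $\vec w\in\mathbb{R}^3$. If $S$ is $\phi$-minimal, then $\vec w$ is proportional to the $\phi$-density vector $\vec v=(\alpha,\beta,\gamma)$, and $S$ is a surface of revolution whose axis is parallel to $\vec v$.
   Context: For a smooth oriented surface $S\subset\mathbb{R}^3$ with unit normal $N$, $H$ denotes its mean curvature normalized so that the mean curvature vector is $\Delta_S X=2HN$ (for a graph $z=u(x,y)$ with upward normal, $2H=\operatorname{div}(\nabla u/\sqrt{1+|\nabla u|^2})$). For $\phi(x,y,z)=\alpha x+\beta y+\gamma z$, the $\phi$-density vector is $\vec v=(\alpha,\beta,\gamma)$ and the $\phi$-mean curvature is $H_\phi=H-\tfrac12\langle N,\vec v\rangle$; $S$ is $\phi$-minimal if $H_\phi\equiv0$. A surface of Riemann type is a surface generated by a smooth one-parameter family of circles (or arcs of circles) all lying in parallel planes; e.g. if the planes are parallel to the $xy$-plane, locally $X(s,t)=(a(s),b(s),s)+r(s)(\cos t,\sin t,0)$ with $a,b,r$ smooth, $r>0$, $t$ in an interval. The result is local. *)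

theory Defs
  imports "HOL-Analysis.Analysis"
begin

definition smooth_on :: "real set \<Rightarrow> (real \<Rightarrow> real) \<Rightarrow> bool" where
  "smooth_on I f \<longleftrightarrow> (\<forall>n. \<forall>x\<in>I. ((deriv ^^ n) f) differentiable (at x))"

definition Xs :: "(real \<Rightarrow> real \<Rightarrow> real^3) \<Rightarrow> real \<Rightarrow> real \<Rightarrow> real^3" where
  "Xs X s t = vector_derivative (\<lambda>\<sigma>. X \<sigma> t) (at s)"
definition Xt :: "(real \<Rightarrow> real \<Rightarrow> real^3) \<Rightarrow> real \<Rightarrow> real \<Rightarrow> real^3" where
  "Xt X s t = vector_derivative (\<lambda>\<tau>. X s \<tau>) (at t)"
definition Xss :: "(real \<Rightarrow> real \<Rightarrow> real^3) \<Rightarrow> real \<Rightarrow> real \<Rightarrow> real^3" where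
  "Xss X s t = vector_derivative (\<lambda>\<sigma>. Xs X \<sigma> t) (at s)"
definition Xst :: "(real \<Rightarrow> real \<Rightarrow> real^3) \<Rightarrow> real \<Rightarrow> real \<Rightarrow> real^3" where
  "Xst X s t = vector_derivative (\<lambda>\<tau>. Xs X s \<tau>) (at t)"
definition Xtt :: "(real \<Rightarrow> real \<Rightarrow> real^3) \<Rightarrow> real \<Rightarrow> real \<Rightarrow> real^3" where
  "Xtt X s t = vector_derivative (\<lambda>\<tau>. Xt X s \<tau>) (at t)"

definition unit_normal :: "(real \<Rightarrow> real \<Rightarrow> real^3) \<Rightarrow> real \<Rightarrow> real \<Rightarrow> real^3" where
  "unit_normal X s t = (1 / norm (cross3 (Xs X s t) (Xt X s t))) *\<^sub>R cross3 (Xs X s t) (Xt X s t)"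

text \<open>Mean curvature, normalized so that the mean curvature vector is 2 H N:
  H = (eG - 2fF + gE) / (2(EG - F^2)).\<close>
definition mean_curv :: "(real \<Rightarrow> real \<Rightarrow> real^3) \<Rightarrow> real \<Rightarrow> real \<Rightarrow> real" where
  "mean_curv X s t =
    (let E = Xs X s t \<bullet> Xs X s t; F = Xs X s t \<bullet> Xt X s t; G = Xt X s t \<bullet> Xt X s t;
         N = unit_normal X s t;
         e = Xss X s t \<bullet> N; f = Xst X s t \<bullet> N; g = Xtt X s t \<bullet> N
     in (e * G - 2 * f * F + g * E) / (2 * (E * G - F\<^sup>2)))"

definition phi_mean_curv :: "real^3 \<Rightarrow> (real \<Rightarrow> real \<Rightarrow> real^3) \<Rightarrow> real \<Rightarrow> real \<Rightarrow> real" where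
  "phi_mean_curv v X s t = mean_curv X s t - (1/2) * (unit_normal X s t \<bullet> v)"

definition phi_minimal :: "real^3 \<Rightarrow> (real \<Rightarrow> real \<Rightarrow> real^3) \<Rightarrow> real set \<Rightarrow> real set \<Rightarrow> bool" where
  "phi_minimal v X I J \<longleftrightarrow> (\<forall>s\<in>I. \<forall>t\<in>J. phi_mean_curv v X s t = 0)"

definition regular_param :: "(real \<Rightarrow> real \<Rightarrow> real^3) \<Rightarrow> real set \<Rightarrow> real set \<Rightarrow> bool" where
  "regular_param X I J \<longleftrightarrow> (\<forall>s\<in>I. \<forall>t\<in>J. cross3 (Xs X s t) (Xt X s t) \<noteq> 0)"

text \<open>Surface of Riemann type with circles in planes orthogonal to w (local form):
  with an orthonormal frame e1, e2, w/|w|,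
  X(s,t) = a(s) e1 + b(s) e2 + s w/|w| + r(s)(cos t e1 + sin t e2).\<close>
definition riemann_param ::
  "real^3 \<Rightarrow> real^3 \<Rightarrow> real^3 \<Rightarrow> (real \<Rightarrow> real) \<Rightarrow> (real \<Rightarrow> real) \<Rightarrow> (real \<Rightarrow> real) \<Rightarrow> real \<Rightarrow> real \<Rightarrow> real^3" where
  "riemann_param w e1 e2 a b r s t =
     a s *\<^sub>R e1 + b s *\<^sub>R e2 + s *\<^sub>R ((1 / norm w) *\<^sub>R w) + r s *\<^sub>R (cos t *\<^sub>R e1 + sin t *\<^sub>R e2)"

definition surface_of_revolution ::
  "(real \<Rightarrow> real \<Rightarrow> real^3) \<Rightarrow> real set \<Rightarrow> real set \<Rightarrow> real^3 \<Rightarrow> real^3 \<Rightarrow> bool" where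
  "surface_of_revolution X I J p d \<longleftrightarrow> d \<noteq> 0 \<and>
     (\<forall>s\<in>I. \<exists>\<mu> \<rho>. \<forall>t\<in>J. (X s t - (p + \<mu> *\<^sub>R d)) \<bullet> d = 0
                        \<and> norm (X s t - (p + \<mu> *\<^sub>R d)) = \<rho>)"

end

theory Submission
  imports Defs "HOL-Complex_Analysis.Complex_Analysis"
begin
unbundle cross3_syntax


lemma trig_extend:
  fixes F :: "real \<Rightarrow> real \<Rightarrow> real" and G :: "complex \<Rightarrow> complex \<Rightarrow> complex"
  assumes hol: "(\<lambda>z. G (cos z) (sin z)) holomorphic_on UNIV"
    and GF: "\<And>x y. G (of_real x) (of_real y) = of_real (F x y)"
    and tt: "t0 < t1" and z: "\<forall>t\<in>{t0<..<t1}. F (cos t) (sin t) = 0"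
  shows "F (cos t) (sin t) = 0"
proof -
  define \<xi> where "\<xi> = (t0 + t1) / 2"
  have lim: "complex_of_real \<xi> islimpt (complex_of_real ` {t0<..<t1})"
  proof (rule islimpt_approachable[THEN iffD2], intro allI impI)
    fix e :: real assume e: "0 < e"
    define d where "d = min (e/2) ((t1 - t0)/4)"
    have d: "0 < d" "d < e" "d < (t1-t0)/2" using e tt unfolding d_def by (auto simp: min_def)
    have m: "\<xi> + d \<in> {t0<..<t1}" using d tt unfolding \<xi>_def by (auto simp: field_simps)
    show "\<exists>x'\<in>complex_of_real ` {t0<..<t1}. x' \<noteq> complex_of_real \<xi> \<and> dist x' (complex_of_real \<xi>) < e"
    proof (intro bexI conjI)
      show "complex_of_real (\<xi> + d) \<noteq> complex_of_real \<xi>" using d by simp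
      show "dist (complex_of_real (\<xi> + d)) (complex_of_real \<xi>) < e"
        using d by (simp add: dist_norm flip: of_real_diff)
      show "complex_of_real (\<xi> + d) \<in> complex_of_real ` {t0<..<t1}" using m by blast
    qed
  qed
  have "(\<lambda>z. G (cos z) (sin z)) (complex_of_real t) = 0"
  proof (rule analytic_continuation[OF hol open_UNIV connected_UNIV _ _ lim])
    fix z assume "z \<in> complex_of_real ` {t0<..<t1}"
    then obtain x where "x \<in> {t0<..<t1}" "z = of_real x" by auto
    then show "G (cos z) (sin z) = 0" using z GF by (simp add: cos_of_real sin_of_real)
  qed auto
  then show ?thesis using GF by (simp add: cos_of_real sin_of_real)
qed




definition Phi :: "real \<Rightarrow> real \<Rightarrow> real \<Rightarrow> real \<Rightarrow> real \<Rightarrow> real \<Rightarrow> real \<Rightarrow> real \<Rightarrow> real \<Rightarrow> real \<Rightarrow> real \<Rightarrow> real \<Rightarrow> real" where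
 "Phi r r1 r2 p q p2 q2 al be ga c s =
   1 + p^2 + q^2 + r1^2 + 2*r1*(p*c+q* s) - r*r2 - r*(p2*c+q2* s)
   - r*(1+(p*c+q* s+r1)^2)*(ga*(p*c+q* s+r1) - al*c - be* s)"

lemma L1:
  assumes r: "r > 0" and Z: "\<And>c s. c^2 + s^2 = 1 \<Longrightarrow> Phi r r1 r2 p q p2 q2 al be ga c s = 0"
    and pq: "p^2 + q^2 \<noteq> 0"
  shows "al = ga*p \<and> be = ga*q \<and> ga*r1 = 0 \<and> 1 + p^2 + q^2 + r1^2 - r*r2 = 0"
proof -
  define h :: real where "h = sqrt 2 / 2"
  have h: "h*h = 1/2" by (simp add: h_def)
  have hh: "h^2 + h^2 = 1" "(-h)^2 + (-h)^2 = 1" "h^2 + (-h)^2 = 1" "(-h)^2 + h^2 = 1"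
    using h by (simp_all add: power2_eq_square)
  let ?P = "Phi r r1 r2 p q p2 q2 al be ga"
  have E1: "?P 1 0 = 0" and E2: "?P (-1) 0 = 0" and E3: "?P 0 1 = 0" and E4: "?P 0 (-1) = 0"
    by (rule Z; simp)+
  have E5: "?P h h = 0" and E6: "?P (-h) (-h) = 0" and E7: "?P h (-h) = 0" and E8: "?P (-h) h = 0"
    using Z[OF hh(1)] Z[OF hh(2)] Z[OF hh(3)] Z[OF hh(4)] by auto
  define m where "m = ga*p - al"
  define n where "n = ga*q - be"
  have "r*(2*(p^2*m+q^2*n) - (p+q)^2*(m+n))
   = 2*h*(?P h h - ?P (-h) (-h) - h*(?P 1 0 - ?P (-1) 0) - h*(?P 0 1 - ?P 0 (-1)))"
    using h unfolding Phi_def m_def n_def by algebra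
  then have a1: "2*(p^2*m+q^2*n) - (p+q)^2*(m+n) = 0" using E1 E2 E3 E4 E5 E6 r by simp
  have "r*(2*(p^2*m-q^2*n) - (p-q)^2*(m-n))
   = 2*h*(?P h (-h) - ?P (-h) h - h*(?P 1 0 - ?P (-1) 0) + h*(?P 0 1 - ?P 0 (-1)))"
    using h unfolding Phi_def m_def n_def by algebra
  then have a2: "2*(p^2*m-q^2*n) - (p-q)^2*(m-n) = 0" using E1 E2 E3 E4 E7 E8 r by simp
  have "(p^2+q^2)^2 * m = 0" using a1 a2 by algebra
  then have m0: "m = 0" using pq by auto
  have "(p^2+q^2)^2 * n = 0" using a1 a2 by algebra
  then have n0: "n = 0" using pq by auto
  have al: "al = ga*p" and be: "be = ga*q" using m0 n0 by (simp_all add: m_def n_def)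
  have "(?P 1 0 + ?P (-1) 0) - (?P 0 1 + ?P 0 (-1)) = -2*r*(ga*r1)*(p^2-q^2)"
    unfolding Phi_def al be by algebra
  then have d1: "ga*r1*(p^2-q^2) = 0" using E1 E2 E3 E4 r by simp
  have "(?P h h + ?P (-h) (-h)) - (?P h (-h) + ?P (-h) h) = -4*r*(ga*r1)*(p*q)"
    using h unfolding Phi_def al be by algebra
  then have d2: "ga*r1*(p*q) = 0" using E5 E6 E7 E8 r by simp
  have "ga*r1*(p^2+q^2)^2 = 0" using d1 d2 by algebra
  then have g0: "ga*r1 = 0" using pq by auto
  have "?P 1 0 + ?P (-1) 0 = 2*(1 + p^2 + q^2 + r1^2 - r*r2) - 2*r*(ga*r1)*(1+r1^2+p^2)"
    unfolding Phi_def al be by algebra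
  then have "1 + p^2 + q^2 + r1^2 - r*r2 = 0" using E1 E2 g0 by simp
  then show ?thesis using al be g0 by simp
qed

lemma L2:
  assumes r: "r > 0" and Z: "\<And>c s. c^2 + s^2 = 1 \<Longrightarrow> Phi r r1 r2 0 0 0 0 al be ga c s = 0"
  shows "al = 0 \<and> be = 0"
proof -
  let ?P = "Phi r r1 r2 0 0 0 0 al be ga"
  have E1: "?P 1 0 = 0" and E2: "?P (-1) 0 = 0" and E3: "?P 0 1 = 0" and E4: "?P 0 (-1) = 0"
    by (rule Z; simp)+
  have "?P 1 0 - ?P (-1) 0 = 2*r*(1+r1^2)*al" unfolding Phi_def by algebra
  moreover have "?P 0 1 - ?P 0 (-1) = 2*r*(1+r1^2)*be" unfolding Phi_def by algebra
  moreover have "1 + r1^2 > 0" by (smt (verit) zero_le_power2)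
  then have "r*(1+r1^2) \<noteq> 0" using r by simp
  ultimately show ?thesis using E1 E2 E3 E4 by simp
qed





definition fr :: "real^3 \<Rightarrow> real^3 \<Rightarrow> real^3 \<Rightarrow> real \<Rightarrow> real \<Rightarrow> real \<Rightarrow> real^3" where
  "fr e1 e2 e3 x y z = x *\<^sub>R e1 + y *\<^sub>R e2 + z *\<^sub>R e3"

definition PsiG :: "'a::comm_ring_1 \<Rightarrow> 'a \<Rightarrow> 'a \<Rightarrow> 'a \<Rightarrow> 'a \<Rightarrow> 'a \<Rightarrow> 'a \<Rightarrow> 'a \<Rightarrow> 'a \<Rightarrow> 'a \<Rightarrow> 'a \<Rightarrow> 'a \<Rightarrow> 'a \<Rightarrow> 'a \<Rightarrow> 'a \<Rightarrow> 'a \<Rightarrow> 'a \<Rightarrow> 'a \<Rightarrow> 'a" where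
 "PsiG x1 y1 z1 x2 y2 z2 xa ya za xb yb zb xc yc zc al be ga =
   (xa*(y1*z2 - z1*y2)+ya*(z1*x2 - x1*z2)+za*(x1*y2 - y1*x2)) * (x2*x2+y2*y2+z2*z2)
   - 2*(xb*(y1*z2 - z1*y2)+yb*(z1*x2 - x1*z2)+zb*(x1*y2 - y1*x2)) * (x1*x2+y1*y2+z1*z2)
   + (xc*(y1*z2 - z1*y2)+yc*(z1*x2 - x1*z2)+zc*(x1*y2 - y1*x2)) * (x1*x1+y1*y1+z1*z1)
   - ((x1*x1+y1*y1+z1*z1)*(x2*x2+y2*y2+z2*z2) - (x1*x2+y1*y2+z1*z2)*(x1*x2+y1*y2+z1*z2))
     * (al*(y1*z2 - z1*y2)+be*(z1*x2 - x1*z2)+ga*(x1*y2 - y1*x2))"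

locale onf =
  fixes e1 e2 e3 :: "real^3"
  assumes n1: "e1 \<bullet> e1 = 1" and n2: "e2 \<bullet> e2 = 1" and n3: "e3 \<bullet> e3 = 1"
    and o12: "e1 \<bullet> e2 = 0" and o13: "e1 \<bullet> e3 = 0" and o23: "e2 \<bullet> e3 = 0"
begin

lemma o21: "e2 \<bullet> e1 = 0" and o31: "e3 \<bullet> e1 = 0" and o32: "e3 \<bullet> e2 = 0"
  using o12 o13 o23 by (simp_all add: inner_commute)

lemma fr_inner: "fr e1 e2 e3 a b c \<bullet> fr e1 e2 e3 d e f = a*d + b*e + c*f"
  by (simp add: fr_def inner_add_left inner_add_right n1 n2 n3 o12 o13 o23 o21 o31 o32)

lemma span3: "x = fr e1 e2 e3 (x \<bullet> e1) (x \<bullet> e2) (x \<bullet> e3)"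
proof -
  define y where "y = x - fr e1 e2 e3 (x \<bullet> e1) (x \<bullet> e2) (x \<bullet> e3)"
  have y1: "y \<bullet> e1 = 0" and y2: "y \<bullet> e2 = 0" and y3: "y \<bullet> e3 = 0"
    by (simp_all add: y_def fr_def inner_diff_left inner_add_left n1 n2 n3 o12 o13 o23 o21 o31 o32)
  define m where "m = e1 \<times> e2"
  have mm: "m \<bullet> m = 1" unfolding m_def using dot_cross[of e1 e2 e1 e2] n1 n2 o12 o21 by simp
  have par: "z = (m \<bullet> z) *\<^sub>R m" if "z \<bullet> e1 = 0" "z \<bullet> e2 = 0" for z
  proof -
    have "z \<times> m = 0" unfolding m_def using that Lagrange[of z e1 e2] by (simp add: inner_commute)
    then have "m \<times> (m \<times> z) = 0" by (metis cross_skew cross_zero_right neg_equal_0_iff_equal)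
    then show ?thesis using Lagrange[of m m z] mm by simp
  qed
  have yp: "y = (m \<bullet> y) *\<^sub>R m" using par y1 y2 by blast
  have ep: "e3 = (m \<bullet> e3) *\<^sub>R m" using par o31 o32 by blast
  have "e3 \<bullet> e3 = (m \<bullet> e3) * (m \<bullet> e3)"
    by (subst (1 2) ep) (simp add: mm)
  then have ne: "m \<bullet> e3 \<noteq> 0" using n3 by auto
  have "y \<bullet> e3 = (m \<bullet> y) * (m \<bullet> e3)"
    by (subst yp, subst ep) (simp add: mm)
  then have "m \<bullet> y = 0" using y3 ne by simp
  then have "y = 0" using yp by simp
  then show ?thesis by (simp add: y_def)
qed

definition T where "T = (e1 \<times> e2) \<bullet> e3"

lemma c12: "e1 \<times> e2 = T *\<^sub>R e3"
  using span3[of "e1 \<times> e2"] by (simp add: fr_def T_def dot_cross_self inner_commute)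
lemma c23: "e2 \<times> e3 = T *\<^sub>R e1"
proof -
  have "e1 \<bullet> (e2 \<times> e3) = T" using cross_triple[of e1 e2 e3] by (simp add: T_def inner_commute)
  then show ?thesis using span3[of "e2 \<times> e3"] by (simp add: fr_def dot_cross_self inner_commute)
qed
lemma c31: "e3 \<times> e1 = T *\<^sub>R e2"
proof -
  have "e2 \<bullet> (e3 \<times> e1) = T" using cross_triple[of e3 e1 e2] by (simp add: T_def inner_commute)
  then show ?thesis using span3[of "e3 \<times> e1"] by (simp add: fr_def dot_cross_self inner_commute)
qed

lemma TT: "T * T = 1"
proof -
  have "(e1 \<times> e2) \<bullet> (e1 \<times> e2) = 1" using dot_cross[of e1 e2 e1 e2] n1 n2 o12 o21 by simp
  then show ?thesis by (simp add: c12 n3)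
qed

lemma fr_cross: "fr e1 e2 e3 a b c \<times> fr e1 e2 e3 d e f = T *\<^sub>R fr e1 e2 e3 (b*f - c*e) (c*d - a*f) (a*e - b*d)"
proof -
  have s: "e2 \<times> e1 = - (T *\<^sub>R e3)" "e3 \<times> e2 = - (T *\<^sub>R e1)" "e1 \<times> e3 = - (T *\<^sub>R e2)"
    using c12 c23 c31 cross_skew by metis+
  show ?thesis
    by (simp add: fr_def cross_add_left cross_add_right cross_mult_left cross_mult_right c12 c23 c31 s
        algebra_simps)
qed

lemma fr_norm: "norm (fr e1 e2 e3 a b c) = sqrt (a*a + b*b + c*c)"
  by (simp add: norm_eq_sqrt_inner fr_inner)

lemma phi_coords:
  assumes d: "Xs X s t = fr e1 e2 e3 x1 y1 z1" "Xt X s t = fr e1 e2 e3 x2 y2 z2"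
     "Xss X s t = fr e1 e2 e3 xa ya za" "Xst X s t = fr e1 e2 e3 xb yb zb"
     "Xtt X s t = fr e1 e2 e3 xc yc zc" and v: "v = fr e1 e2 e3 al be ga"
    and Qn: "(y1*z2 - z1*y2)*(y1*z2 - z1*y2) + (z1*x2 - x1*z2)*(z1*x2 - x1*z2) + (x1*y2 - y1*x2)*(x1*y2 - y1*x2) \<noteq> 0"
    and pm: "phi_mean_curv v X s t = 0"
  shows "PsiG x1 y1 z1 x2 y2 z2 xa ya za xb yb zb xc yc zc al be ga = 0"
proof -
  define k1 where "k1 = y1*z2 - z1*y2"
  define k2 where "k2 = z1*x2 - x1*z2"
  define k3 where "k3 = x1*y2 - y1*x2"
  define Q where "Q = k1*k1 + k2*k2 + k3*k3"
  have "Q \<ge> 0" unfolding Q_def by simp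
  moreover have "Q \<noteq> 0" using Qn unfolding Q_def k1_def k2_def k3_def by simp
  ultimately have Qp: "Q > 0" by simp
  have "(T-1)*(T+1) = 0" using TT by algebra
  then have aT: "\<bar>T\<bar> = 1" by auto
  have cr: "cross3 (Xs X s t) (Xt X s t) = T *\<^sub>R fr e1 e2 e3 k1 k2 k3"
    using d by (simp add: fr_cross k1_def k2_def k3_def)
  have nc: "norm (cross3 (Xs X s t) (Xt X s t)) = sqrt Q"
    by (simp add: cr fr_norm aT Q_def)
  define S where "S = T / sqrt Q"
  have N: "unit_normal X s t = S *\<^sub>R fr e1 e2 e3 k1 k2 k3"
    unfolding unit_normal_def by (simp only: nc) (simp add: cr S_def)
  define num where "num = (xa*k1+ya*k2+za*k3) * (x2*x2+y2*y2+z2*z2)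
   - 2*(xb*k1+yb*k2+zb*k3) * (x1*x2+y1*y2+z1*z2)
   + (xc*k1+yc*k2+zc*k3) * (x1*x1+y1*y1+z1*z1)"
  define nv where "nv = al*k1+be*k2+ga*k3"
  have D: "(x1*x1+y1*y1+z1*z1)*(x2*x2+y2*y2+z2*z2) - (x1*x2+y1*y2+z1*z2)^2 = Q"
    unfolding Q_def k1_def k2_def k3_def by algebra
  have eE: "Xs X s t \<bullet> Xs X s t = x1*x1+y1*y1+z1*z1" "Xs X s t \<bullet> Xt X s t = x1*x2+y1*y2+z1*z2"
    "Xt X s t \<bullet> Xt X s t = x2*x2+y2*y2+z2*z2"
    "Xss X s t \<bullet> unit_normal X s t = S * (xa*k1+ya*k2+za*k3)"
    "Xst X s t \<bullet> unit_normal X s t = S * (xb*k1+yb*k2+zb*k3)"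
    "Xtt X s t \<bullet> unit_normal X s t = S * (xc*k1+yc*k2+zc*k3)"
    unfolding N d by (simp_all only: fr_inner inner_scaleR_right)
  have mc0: "mean_curv X s t = (S * (xa*k1+ya*k2+za*k3) * (x2*x2+y2*y2+z2*z2) - 2 * (S * (xb*k1+yb*k2+zb*k3)) * (x1*x2+y1*y2+z1*z2)
      + S * (xc*k1+yc*k2+zc*k3) * (x1*x1+y1*y1+z1*z1)) / (2 * ((x1*x1+y1*y1+z1*z1)*(x2*x2+y2*y2+z2*z2) - (x1*x2+y1*y2+z1*z2)^2))"
    unfolding mean_curv_def Let_def eE by (rule refl)
  have mc: "mean_curv X s t = S * num / (2*Q)"
    unfolding mc0 D num_def by (simp only: algebra_simps)
  have nvv: "unit_normal X s t \<bullet> v = S * nv"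
    unfolding N v by (simp add: fr_inner nv_def)
  have "S * (num / (2*Q) - nv/2) = 0" using pm unfolding phi_mean_curv_def mc nvv
    by (simp add: algebra_simps)
  moreover have "S \<noteq> 0" using aT Qp by (auto simp: S_def)
  ultimately have "num / (2*Q) = nv/2" by simp
  then have "num = Q * nv" using Qp by (simp add: field_simps)
  then show ?thesis unfolding PsiG_def using D
    by (simp add: num_def nv_def k1_def k2_def k3_def power2_eq_square)
qed

end




lemma fr_vd:
  assumes "(f has_real_derivative f') (at x)" "(g has_real_derivative g') (at x)" "(h has_real_derivative h') (at x)"
  shows "((\<lambda>x. fr e1 e2 e3 (f x) (g x) (h x)) has_vector_derivative fr e1 e2 e3 f' g' h') (at x)"
proof -
  have "((\<lambda>x. f x *\<^sub>R e1 + g x *\<^sub>R e2 + h x *\<^sub>R e3) has_vector_derivative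
     ((f x *\<^sub>R 0 + f' *\<^sub>R e1) + (g x *\<^sub>R 0 + g' *\<^sub>R e2) + (h x *\<^sub>R 0 + h' *\<^sub>R e3))) (at x)"
    by (intro has_vector_derivative_add has_vector_derivative_scaleR assms has_vector_derivative_const)
  then show ?thesis by (simp add: fr_def)
qed

lemma smooth_D:
  assumes "smooth_on I f" "x \<in> I"
  shows "(f has_real_derivative deriv f x) (at x)" "(deriv f has_real_derivative deriv (deriv f) x) (at x)"
proof -
  have "((deriv ^^ 0) f) differentiable (at x)" "((deriv ^^ 1) f) differentiable (at x)"
    using assms unfolding smooth_on_def by blast+
  then show "(f has_real_derivative deriv f x) (at x)" "(deriv f has_real_derivative deriv (deriv f) x) (at x)"
    by (simp_all add: DERIV_deriv_iff_real_differentiable)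
qed

context
  fixes e1 e2 e3 :: "real^3" and a b r :: "real \<Rightarrow> real" and X I
  assumes XF: "X = (\<lambda>s t. fr e1 e2 e3 (a s + r s * cos t) (b s + r s * sin t) s)"
    and I: "open I" and sa: "smooth_on I a" and sb: "smooth_on I b" and sr: "smooth_on I r"
begin

lemma Xt_eq: "Xt X s t = fr e1 e2 e3 (-(r s * sin t)) (r s * cos t) 0"
  unfolding Xt_def XF
  by (rule vector_derivative_at, rule fr_vd) (auto intro!: derivative_eq_intros)

lemma Xtt_eq: "Xtt X s t = fr e1 e2 e3 (-(r s * cos t)) (-(r s * sin t)) 0"
  unfolding Xtt_def Xt_eq
  by (rule vector_derivative_at, rule fr_vd) (auto intro!: derivative_eq_intros)

lemma Xs_eq: "s \<in> I \<Longrightarrow> Xs X s t = fr e1 e2 e3 (deriv a s + deriv r s * cos t) (deriv b s + deriv r s * sin t) 1"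
  unfolding Xs_def XF
  by (rule vector_derivative_at, rule fr_vd)
     (auto intro!: derivative_eq_intros smooth_D[OF sa] smooth_D[OF sb] smooth_D[OF sr])

lemma Xst_eq: assumes s: "s \<in> I" shows "Xst X s t = fr e1 e2 e3 (-(deriv r s * sin t)) (deriv r s * cos t) 0"
proof -
  have XsF: "Xs X s = (\<lambda>t. fr e1 e2 e3 (deriv a s + deriv r s * cos t) (deriv b s + deriv r s * sin t) 1)"
    using Xs_eq[OF s] by (simp add: fun_eq_iff)
  show ?thesis unfolding Xst_def XsF
  by (rule vector_derivative_at, rule fr_vd) (auto intro!: derivative_eq_intros)
qed

lemma Xss_eq: "s \<in> I \<Longrightarrow> Xss X s t = fr e1 e2 e3 (deriv (deriv a) s + deriv (deriv r) s * cos t)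
    (deriv (deriv b) s + deriv (deriv r) s * sin t) 0"
  unfolding Xss_def
proof (rule vector_derivative_at, rule has_vector_derivative_transform_within_open[OF _ I])
  assume s: "s \<in> I"
  show "((\<lambda>\<sigma>. fr e1 e2 e3 (deriv a \<sigma> + deriv r \<sigma> * cos t) (deriv b \<sigma> + deriv r \<sigma> * sin t) 1) has_vector_derivative
     fr e1 e2 e3 (deriv (deriv a) s + deriv (deriv r) s * cos t) (deriv (deriv b) s + deriv (deriv r) s * sin t) 0) (at s)"
    by (rule fr_vd) (auto intro!: derivative_eq_intros smooth_D[OF sa s] smooth_D[OF sb s] smooth_D[OF sr s])
  show "s \<in> I" by fact
  show "\<And>y. y \<in> I \<Longrightarrow> fr e1 e2 e3 (deriv a y + deriv r y * cos t) (deriv b y + deriv r y * sin t) 1 = Xs X y t"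
    by (simp add: Xs_eq)
qed

end




lemma Psi_Phi:
  assumes "c^2 + y^2 = 1"
  shows "PsiG (p + r1*c) (q + r1*y) 1 (-(r*y)) (r*c) 0 (p2 + r2*c) (q2 + r2*y) 0 (-(r1*y)) (r1*c) 0
     (-(r*c)) (-(r*y)) 0 al be ga = r^2 * Phi r r1 r2 p q p2 q2 al be ga c y"
  using assms unfolding PsiG_def Phi_def by algebra

lemma deriv_zero_ev:
  fixes f :: "real \<Rightarrow> real"
  assumes "eventually (\<lambda>\<sigma>. f \<sigma> = 0) (nhds s)" "(f has_real_derivative D) (at s)"
  shows "D = 0"
proof -
  have "((\<lambda>_. 0::real) has_real_derivative D) (at s)"
    using assms(2) DERIV_cong_ev[OF refl assms(1) refl] by simp
  then show ?thesis using DERIV_const DERIV_unique by blast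
qed

theorem theorem2:
  fixes v w e1 e2 :: "real^3" and a b r :: "real \<Rightarrow> real" and s0 s1 t0 t1 :: real
  assumes v_nz: "v \<noteq> 0"
    and w_nz: "w \<noteq> 0"
    and frame: "norm e1 = 1" "norm e2 = 1" "e1 \<bullet> e2 = 0" "e1 \<bullet> w = 0" "e2 \<bullet> w = 0"
    and intervals: "s0 < s1" "t0 < t1"
    and smooth: "smooth_on {s0<..<s1} a" "smooth_on {s0<..<s1} b" "smooth_on {s0<..<s1} r"
    and r_pos: "\<forall>s\<in>{s0<..<s1}. r s > 0"
    and regular: "regular_param (riemann_param w e1 e2 a b r) {s0<..<s1} {t0<..<t1}"
    and minimal: "phi_minimal v (riemann_param w e1 e2 a b r) {s0<..<s1} {t0<..<t1}"
  shows "(\<exists>k. w = k *\<^sub>R v) \<and>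
         (\<exists>p. surface_of_revolution (riemann_param w e1 e2 a b r) {s0<..<s1} {t0<..<t1} p v)"
proof -
  define I where "I = {s0<..<s1}"
  define nn where "nn = (1 / norm w) *\<^sub>R w"
  have nw: "norm w \<noteq> 0" using w_nz by simp
  have "e1 \<bullet> e1 = 1" "e2 \<bullet> e2 = 1" using frame(1,2) power2_norm_eq_inner[of e1] power2_norm_eq_inner[of e2] by simp_all
  moreover have "nn \<bullet> nn = 1" using nw by (simp add: nn_def power2_norm_eq_inner[symmetric] power2_eq_square)
  moreover have "e1 \<bullet> nn = 0" "e2 \<bullet> nn = 0" using frame(4,5) by (simp_all add: nn_def)
  ultimately interpret F: onf e1 e2 nn using frame(3) by unfold_locales auto
  define X where "X = riemann_param w e1 e2 a b r"
  have XF: "X = (\<lambda>s t. fr e1 e2 nn (a s + r s * cos t) (b s + r s * sin t) s)"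
    by (simp add: X_def riemann_param_def fr_def nn_def fun_eq_iff algebra_simps)
  have oI: "open I" by (simp add: I_def)
  note sm = smooth[folded I_def]
  note Xt = Xt_eq[OF XF oI sm] and Xtt = Xtt_eq[OF XF oI sm] and Xs = Xs_eq[OF XF oI sm]
    and Xst = Xst_eq[OF XF oI sm] and Xss = Xss_eq[OF XF oI sm]
  define al where "al = v \<bullet> e1"
  define be where "be = v \<bullet> e2"
  define ga where "ga = v \<bullet> nn"
  have vF: "v = fr e1 e2 nn al be ga" unfolding al_def be_def ga_def by (rule F.span3)
  define a1 where "a1 = deriv a"
  define b1 where "b1 = deriv b"
  define r1 where "r1 = deriv r"
  define a2 where "a2 = deriv a1"
  define b2 where "b2 = deriv b1"
  define r2 where "r2 = deriv r1"
  note Xs' = Xs[folded a1_def b1_def r1_def] and Xst' = Xst[folded r1_def]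
    and Xss' = Xss[folded a1_def b1_def r1_def, folded a2_def b2_def r2_def]
  have Da: "\<And>s. s \<in> I \<Longrightarrow> (a has_real_derivative a1 s) (at s) \<and> (a1 has_real_derivative a2 s) (at s)"
    using smooth_D[OF sm(1)] by (simp add: a1_def a2_def)
  have Db: "\<And>s. s \<in> I \<Longrightarrow> (b has_real_derivative b1 s) (at s) \<and> (b1 has_real_derivative b2 s) (at s)"
    using smooth_D[OF sm(2)] by (simp add: b1_def b2_def)
  have Dr: "\<And>s. s \<in> I \<Longrightarrow> (r has_real_derivative r1 s) (at s) \<and> (r1 has_real_derivative r2 s) (at s)"
    using smooth_D[OF sm(3)] by (simp add: r1_def r2_def)
  have Zs: "Phi (r s) (r1 s) (r2 s) (a1 s) (b1 s) (a2 s) (b2 s) al be ga c y = 0"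
    if s: "s \<in> I" and u: "c^2 + y^2 = 1" for s c y
  proof -
    define PR where "PR = (\<lambda>c y. PsiG (a1 s + r1 s * c) (b1 s + r1 s * y) 1 (-(r s * y)) (r s * c) 0
      (a2 s + r2 s * c) (b2 s + r2 s * y) 0 (-(r1 s * y)) (r1 s * c) 0 (-(r s * c)) (-(r s * y)) 0 al be ga)"
    define PC where "PC = (\<lambda>c y. PsiG (complex_of_real (a1 s) + complex_of_real (r1 s) * c)
      (complex_of_real (b1 s) + complex_of_real (r1 s) * y) 1 (-(complex_of_real (r s) * y)) (complex_of_real (r s) * c) 0
      (complex_of_real (a2 s) + complex_of_real (r2 s) * c) (complex_of_real (b2 s) + complex_of_real (r2 s) * y) 0
      (-(complex_of_real (r1 s) * y)) (complex_of_real (r1 s) * c) 0 (-(complex_of_real (r s) * c))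
      (-(complex_of_real (r s) * y)) 0 (complex_of_real al) (complex_of_real be) (complex_of_real ga))"
    have rs: "r s > 0" using r_pos s by (simp add: I_def)
    have tJ: "\<forall>t\<in>{t0<..<t1}. PR (cos t) (sin t) = 0"
    proof
      fix t assume t: "t \<in> {t0<..<t1}"
      have Qn: "(y1 * z2 - z1 * y2) * (y1 * z2 - z1 * y2) + (z1 * x2 - x1 * z2) * (z1 * x2 - x1 * z2) + (x1 * y2 - y1 * x2) * (x1 * y2 - y1 * x2) \<noteq> 0"
        if "x1 = a1 s + r1 s * cos t" "y1 = b1 s + r1 s * sin t" "z1 = 1" "x2 = -(r s * sin t)" "y2 = r s * cos t" "z2 = 0"
        for x1 y1 z1 x2 y2 z2
      proof -
        have "(y1 * z2 - z1 * y2) * (y1 * z2 - z1 * y2) + (z1 * x2 - x1 * z2) * (z1 * x2 - x1 * z2) = ((sin t)^2 + (cos t)^2) * (r s * r s)"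
          unfolding that by algebra
        then have "(y1 * z2 - z1 * y2) * (y1 * z2 - z1 * y2) + (z1 * x2 - x1 * z2) * (z1 * x2 - x1 * z2) = r s * r s"
          by simp
        then show ?thesis using rs by (smt (verit) zero_le_square mult_pos_pos)
      qed
      have pm: "phi_mean_curv v X s t = 0" using minimal s t by (simp add: phi_minimal_def X_def I_def)
      show "PR (cos t) (sin t) = 0" unfolding PR_def
        by (rule F.phi_coords[OF Xs'[OF s] Xt Xss'[OF s] Xst'[OF s] Xtt vF Qn[OF refl refl refl refl refl refl] pm])
    qed
    have all: "PR (cos t) (sin t) = 0" for t
    proof (rule trig_extend[OF _ _ intervals(2) tJ])
      show "(\<lambda>z. PC (cos z) (sin z)) holomorphic_on UNIV"
        unfolding PC_def PsiG_def by (intro holomorphic_intros)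
      show "PC (complex_of_real x) (complex_of_real y) = complex_of_real (PR x y)" for x y
        unfolding PC_def PR_def PsiG_def by simp
    qed
    obtain t where "c = cos t" "y = sin t" using sincos_total_2pi[OF u] by metis
    then have "PR c y = 0" using all by simp
    then have "(r s)^2 * Phi (r s) (r1 s) (r2 s) (a1 s) (b1 s) (a2 s) (b2 s) al be ga c y = 0"
      unfolding PR_def Psi_Phi[OF u] .
    then show ?thesis using rs by simp
  qed
  have vnz: "(al, be, ga) \<noteq> (0, 0, 0)" using v_nz vF by (auto simp: fr_def)
  have ab0: "a1 s = 0 \<and> b1 s = 0" if s: "s \<in> I" for s
  proof (rule ccontr)
    assume "\<not> (a1 s = 0 \<and> b1 s = 0)"
    then have rho: "(a1 s)^2 + (b1 s)^2 > 0" by (auto simp: add_pos_nonneg add_nonneg_pos)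
    have L: "al = ga * a1 \<sigma> \<and> be = ga * b1 \<sigma> \<and> ga * r1 \<sigma> = 0 \<and> 1 + (a1 \<sigma>)^2 + (b1 \<sigma>)^2 + (r1 \<sigma>)^2 - r \<sigma> * r2 \<sigma> = 0"
      if "\<sigma> \<in> I" "(a1 \<sigma>)^2 + (b1 \<sigma>)^2 > 0" for \<sigma>
    proof -
      have "(a1 \<sigma>)^2 + (b1 \<sigma>)^2 \<noteq> 0" using that(2) by linarith
      moreover have "r \<sigma> > 0" using r_pos that(1) by (simp add: I_def)
      ultimately show ?thesis using L1 Zs[OF that(1)] by blast
    qed
    have ga: "ga \<noteq> 0" using L[OF s rho] vnz by auto
    have "isCont a1 s" "isCont b1 s" using Da[OF s] Db[OF s] by (auto intro: DERIV_isCont)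
    then have "isCont (\<lambda>\<sigma>. (a1 \<sigma>)^2 + (b1 \<sigma>)^2) s" by (intro continuous_intros)
    then have "eventually (\<lambda>\<sigma>. (a1 \<sigma>)^2 + (b1 \<sigma>)^2 > 0) (at s)"
      using order_tendstoD(1)[OF _ rho] unfolding isCont_def by blast
    then have ev1: "eventually (\<lambda>\<sigma>. (a1 \<sigma>)^2 + (b1 \<sigma>)^2 > 0) (nhds s)"
      using rho by (simp add: eventually_nhds_conv_at)
    have ev2: "eventually (\<lambda>\<sigma>. \<sigma> \<in> I) (nhds s)" using oI s by (rule eventually_nhds_in_open)
    have ev: "eventually (\<lambda>\<sigma>. r1 \<sigma> = 0) (nhds s)"
      using ev1 ev2 by eventually_elim (metis L ga mult_eq_0_iff)
    have "r2 s = 0" using deriv_zero_ev[OF ev] Dr[OF s] by blast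
    moreover have "r1 s = 0" using L[OF s rho] ga by simp
    ultimately have "1 + (a1 s)^2 + (b1 s)^2 = 0" using L[OF s rho] by simp
    then show False by (smt (verit) zero_le_power2)
  qed
  have ab2: "a2 s = 0 \<and> b2 s = 0" if s: "s \<in> I" for s
  proof -
    have ev2: "eventually (\<lambda>\<sigma>. \<sigma> \<in> I) (nhds s)" using oI s by (rule eventually_nhds_in_open)
    have "eventually (\<lambda>\<sigma>. a1 \<sigma> = 0) (nhds s)" "eventually (\<lambda>\<sigma>. b1 \<sigma> = 0) (nhds s)"
      using ev2 by (auto elim!: eventually_mono simp: ab0)
    then show ?thesis using deriv_zero_ev Da[OF s] Db[OF s] by blast
  qed
  define sm0 where "sm0 = (s0 + s1) / 2"
  have sm0: "sm0 \<in> I" using intervals(1) by (simp add: sm0_def I_def field_simps)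
  have "al = 0 \<and> be = 0"
  proof (rule L2)
    show "r sm0 > 0" using r_pos sm0 by (simp add: I_def)
    show "Phi (r sm0) (r1 sm0) (r2 sm0) 0 0 0 0 al be ga c y = 0" if "c^2 + y^2 = 1" for c y
      using Zs[OF sm0 that] ab0[OF sm0] ab2[OF sm0] by simp
  qed
  then have al0: "al = 0" and be0: "be = 0" by auto
  have ga: "ga \<noteq> 0" using vnz al0 be0 by auto
  have vn: "v = ga *\<^sub>R nn" using vF al0 be0 by (simp add: fr_def)
  have "\<exists>A. \<forall>x\<in>I. a x = A"
  proof (rule has_field_derivative_zero_constant)
    show "convex I" by (simp add: I_def)
    fix x assume x: "x \<in> I"
    then have "(a has_real_derivative 0) (at x)" using Da[OF x] ab0[OF x] by metis
    then show "(a has_field_derivative 0) (at x within I)" by (rule has_field_derivative_at_within)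
  qed
  then obtain A where A: "\<And>x. x \<in> I \<Longrightarrow> a x = A" by blast
  have "\<exists>B. \<forall>x\<in>I. b x = B"
  proof (rule has_field_derivative_zero_constant)
    show "convex I" by (simp add: I_def)
    fix x assume x: "x \<in> I"
    then have "(b has_real_derivative 0) (at x)" using Db[OF x] ab0[OF x] by metis
    then show "(b has_field_derivative 0) (at x within I)" by (rule has_field_derivative_at_within)
  qed
  then obtain B where B: "\<And>x. x \<in> I \<Longrightarrow> b x = B" by blast
  have part1: "\<exists>k. w = k *\<^sub>R v"
  proof (intro exI)
    show "w = (norm w / ga) *\<^sub>R v" using ga nw by (simp add: vn nn_def)
  qed
  have part2: "surface_of_revolution X I {t0<..<t1} (A *\<^sub>R e1 + B *\<^sub>R e2) v"
    unfolding surface_of_revolution_def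
  proof (intro conjI ballI exI allI)
    show "v \<noteq> 0" by fact
    fix s t assume s: "s \<in> I" and t: "t \<in> {t0<..<t1}"
    have eq: "X s t - (A *\<^sub>R e1 + B *\<^sub>R e2 + (s / ga) *\<^sub>R v) = fr e1 e2 nn (r s * cos t) (r s * sin t) 0"
      using ga by (simp add: XF A[OF s] B[OF s] vn fr_def algebra_simps)
    show "(X s t - (A *\<^sub>R e1 + B *\<^sub>R e2 + (s / ga) *\<^sub>R v)) \<bullet> v = 0"
      unfolding eq by (simp add: vF al0 be0 F.fr_inner)
    have rs: "r s > 0" using r_pos s by (simp add: I_def)
    have "norm (fr e1 e2 nn (r s * cos t) (r s * sin t) 0) = sqrt ((r s)^2 * ((sin t)^2 + (cos t)^2))"
      unfolding F.fr_norm by (rule arg_cong[where f=sqrt]) algebra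
    also have "\<dots> = r s" using rs by simp
    finally show "norm (X s t - (A *\<^sub>R e1 + B *\<^sub>R e2 + (s / ga) *\<^sub>R v)) = r s" unfolding eq .
  qed
  show ?thesis using part1 part2 by (auto simp: X_def I_def)
qed


end
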